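(* Let $R>0$, $n\ge2$, and let $u,\tilde u$ be radially symmetric functions with $u,\tilde u\in C^{2,1}((B_R\setminus\{0\})\times(0,\infty))\cap C(\overline{B_R}\times[0,\infty))$, $\sup u_r\le0$, $\sup\tilde u_r\le0$, which both solve $(\ast)$ with the same initial datum $u_0$. Then $u=\tilde u$.
   Context: $B_R=\{x\in\mathbb R^n:|x|<R\}$; radial functions written in $r=|x|$, subscript $r$ = radial derivative. $u^*(r):=-\sqrt[3]{9n-15}\,r^{1/3}$. Problem $(\ast)$: $u_t=\Delta u+uu_r^3$ in $(B_R\setminus\{0\})\times(0,\infty)$, $u(0,t)=0$ and $u(R,t)=u^*(R)$ for $t>0$, $u(\cdot,0)=u_0$ in $\overline{B_R}$. *)

theory Defs
  imports "HOL-Analysis.Analysis"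
begin

text \<open>Radial functions are written as functions of r = |x| and t.
  The steady state u*(r) = - cbrt(9n-15) r^(1/3).\<close>

definition ustar :: "nat \<Rightarrow> real \<Rightarrow> real" where
  "ustar n r = - root 3 (9 * real n - 15) * r powr (1/3)"

text \<open>The punctured space-time domain (B_R minus 0) x (0,inf), in radial coordinates.\<close>

definition dom_int :: "real \<Rightarrow> (real \<times> real) set" where
  "dom_int R = {0<..<R} \<times> {0<..}"

text \<open>u (radial) is a C^{2,1} function on the punctured domain, continuous up to
  the closure [0,R] x [0,inf), with sup u_r \<le> 0, and solves problem (*):
  u_t = u_rr + (n-1)/r u_r + u u_r^3 (the radial form of u_t = Delta u + u u_r^3),
  u(0,t) = 0, u(R,t) = u*(R) for t > 0, and u(r,0) = u0(r) for 0 \<le> r \<le> R.\<close>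

definition radial_solution ::
  "nat \<Rightarrow> real \<Rightarrow> (real \<Rightarrow> real) \<Rightarrow> (real \<Rightarrow> real \<Rightarrow> real) \<Rightarrow> bool" where
  "radial_solution n R u0 u \<longleftrightarrow>
     continuous_on ({0..R} \<times> {0..}) (\<lambda>(r,t). u r t) \<and>
     (\<exists>ur urr ut.
        continuous_on (dom_int R) (\<lambda>(r,t). ur r t) \<and>
        continuous_on (dom_int R) (\<lambda>(r,t). urr r t) \<and>
        continuous_on (dom_int R) (\<lambda>(r,t). ut r t) \<and>
        (\<forall>(r,t)\<in>dom_int R.
           ((\<lambda>s. u s t) has_real_derivative ur r t) (at r) \<and>
           ((\<lambda>s. ur s t) has_real_derivative urr r t) (at r) \<and>
           ((\<lambda>s. u r s) has_real_derivative ut r t) (at t) \<and>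
           ut r t = urr r t + (real n - 1) / r * ur r t + u r t * (ur r t) ^ 3 \<and>
           ur r t \<le> 0)) \<and>
     (\<forall>t>0. u 0 t = 0 \<and> u R t = ustar n R) \<and>
     (\<forall>r\<in>{0..R}. u r 0 = u0 r)"

end

theory Submission
  imports Defs
begin

lemma one_side:
  fixes n :: nat and R :: real and u0 :: "real \<Rightarrow> real"
    and u v :: "real \<Rightarrow> real \<Rightarrow> real"
  assumes R: "R > 0"
    and su: "radial_solution n R u0 u"
    and sv: "radial_solution n R u0 v"
    and r1: "r1 \<in> {0..R}" and t1: "t1 \<ge> 0"
  shows "u r1 t1 \<le> v r1 t1"
proof (rule ccontr)
  assume "\<not> u r1 t1 \<le> v r1 t1"
  hence pos1: "u r1 t1 - v r1 t1 > 0" by simp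
  have cu: "continuous_on ({0..R} \<times> {0..}) (\<lambda>(r,t). u r t)"
   and bu: "\<forall>t>0. u 0 t = 0 \<and> u R t = ustar n R"
   and iu: "\<forall>r\<in>{0..R}. u r 0 = u0 r"
    using su unfolding radial_solution_def by auto
  obtain ur urr ut where
    du: "\<forall>(r,t)\<in>dom_int R.
           ((\<lambda>s. u s t) has_real_derivative ur r t) (at r) \<and>
           ((\<lambda>s. ur s t) has_real_derivative urr r t) (at r) \<and>
           ((\<lambda>s. u r s) has_real_derivative ut r t) (at t) \<and>
           ut r t = urr r t + (real n - 1) / r * ur r t + u r t * (ur r t) ^ 3 \<and>
           ur r t \<le> 0"
    using su unfolding radial_solution_def by blast
  have cv: "continuous_on ({0..R} \<times> {0..}) (\<lambda>(r,t). v r t)"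
   and bv: "\<forall>t>0. v 0 t = 0 \<and> v R t = ustar n R"
   and iv: "\<forall>r\<in>{0..R}. v r 0 = u0 r"
    using sv unfolding radial_solution_def by auto
  obtain vr vrr vt where
    dv: "\<forall>(r,t)\<in>dom_int R.
           ((\<lambda>s. v s t) has_real_derivative vr r t) (at r) \<and>
           ((\<lambda>s. vr s t) has_real_derivative vrr r t) (at r) \<and>
           ((\<lambda>s. v r s) has_real_derivative vt r t) (at t) \<and>
           vt r t = vrr r t + (real n - 1) / r * vr r t + v r t * (vr r t) ^ 3 \<and>
           vr r t \<le> 0"
    using sv unfolding radial_solution_def by blast
  define z where "z = (\<lambda>(r::real,t::real). exp (-t) * (u r t - v r t))"
  define K where "K = {0..R} \<times> {0..t1}"
  have KS: "K \<subseteq> {0..R} \<times> {0..}" unfolding K_def by auto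
  have cz: "continuous_on K z"
  proof -
    have a: "continuous_on K (\<lambda>(r,t). u r t)" using continuous_on_subset[OF cu KS] .
    have b: "continuous_on K (\<lambda>(r,t). v r t)" using continuous_on_subset[OF cv KS] .
    have c: "continuous_on K (\<lambda>p. exp (- snd p))"
      by (intro continuous_intros)
    have "continuous_on K (\<lambda>p. exp (- snd p) * ((\<lambda>(r,t). u r t) p - (\<lambda>(r,t). v r t) p))"
      by (intro continuous_on_mult c continuous_on_diff a b)
    thus ?thesis unfolding z_def by (simp add: case_prod_beta)
  qed
  have compK: "compact K" unfolding K_def by (intro compact_Times compact_Icc)
  have "(r1,t1) \<in> K" using r1 t1 unfolding K_def by auto
  then obtain p where pK: "p \<in> K" and pmax: "\<forall>y\<in>K. z y \<le> z p"
    using continuous_attains_sup[OF compK _ cz] by blast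
  obtain r0 t0 where p: "p = (r0,t0)" by (cases p)
  have "z (r1,t1) > 0" unfolding z_def using pos1 by simp
  also have "z (r1,t1) \<le> z p" using pmax \<open>(r1,t1) \<in> K\<close> by blast
  finally have zp: "z (r0,t0) > 0" using p by simp
  hence w0: "u r0 t0 - v r0 t0 > 0" unfolding z_def
    by (simp add: zero_less_mult_iff)
  have r0R: "0 \<le> r0" "r0 \<le> R" and t0: "0 \<le> t0" "t0 \<le> t1" using pK p unfolding K_def by auto
  have t0p: "t0 > 0"
  proof (rule ccontr)
    assume "\<not> t0 > 0" hence "t0 = 0" using t0 by simp
    thus False using w0 iu iv r0R by auto
  qed
  have r0p: "0 < r0" "r0 < R"
  proof -
    show "0 < r0" proof (rule ccontr)
      assume "\<not> 0 < r0" hence "r0 = 0" using r0R by simp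
      thus False using w0 bu bv t0p by auto
    qed
    show "r0 < R" proof (rule ccontr)
      assume "\<not> r0 < R" hence "r0 = R" using r0R by simp
      thus False using w0 bu bv t0p by auto
    qed
  qed
  have indom: "\<And>r. 0 < r \<Longrightarrow> r < R \<Longrightarrow> (r,t0) \<in> dom_int R"
    using t0p unfolding dom_int_def by auto
  have D0: "(r0,t0) \<in> dom_int R" using indom r0p by auto
  have wmax: "\<And>y. 0 \<le> y \<Longrightarrow> y \<le> R \<Longrightarrow> u y t0 - v y t0 \<le> u r0 t0 - v r0 t0"
  proof -
    fix y assume "0 \<le> y" "y \<le> R"
    hence "(y,t0) \<in> K" using t0 unfolding K_def by auto
    hence "z (y,t0) \<le> z (r0,t0)" using pmax p by auto
    thus "u y t0 - v y t0 \<le> u r0 t0 - v r0 t0" unfolding z_def by simp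
  qed
  define wr where "wr = (\<lambda>s. ur s t0 - vr s t0)"
  have dw: "\<And>s. 0 < s \<Longrightarrow> s < R \<Longrightarrow> ((\<lambda>y. u y t0 - v y t0) has_real_derivative wr s) (at s)"
    unfolding wr_def using du dv indom by (fastforce intro: DERIV_diff)
  have dwr: "((\<lambda>y. wr y) has_real_derivative (urr r0 t0 - vrr r0 t0)) (at r0)"
    unfolding wr_def using du dv D0 by (fastforce intro: DERIV_diff)
  define d where "d = min r0 (R - r0)"
  have dpos: "d > 0" unfolding d_def using r0p by simp
  have wr0: "wr r0 = 0"
  proof (rule DERIV_local_max[OF dw[OF r0p] dpos])
    show "\<forall>y. \<bar>r0 - y\<bar> < d \<longrightarrow> u y t0 - v y t0 \<le> u r0 t0 - v r0 t0"
      using wmax unfolding d_def by (auto simp: abs_if split: if_splits)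
  qed
  have wrr: "urr r0 t0 - vrr r0 t0 \<le> 0"
  proof (rule ccontr)
    assume "\<not> ?thesis" hence "urr r0 t0 - vrr r0 t0 > 0" by simp
    from DERIV_pos_inc_right[OF dwr this] obtain e where e: "e > 0"
      and he: "\<forall>h>0. h < e \<longrightarrow> wr r0 < wr (r0 + h)" by blast
    define h where "h = min (e/2) ((R - r0)/2)"
    have h: "h > 0" "h < e" "r0 + h < R" unfolding h_def using e r0p by (auto simp: min_def field_simps)
    have "\<exists>x. r0 < x \<and> x < r0 + h \<and>
       (u (r0+h) t0 - v (r0+h) t0) - (u r0 t0 - v r0 t0) = (r0 + h - r0) * wr x"
      apply (rule MVT2[where f="\<lambda>y. u y t0 - v y t0"])
      using h r0p by (auto intro: dw)
    then obtain x where x: "r0 < x" "x < r0 + h"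
      and eq: "(u (r0+h) t0 - v (r0+h) t0) - (u r0 t0 - v r0 t0) = h * wr x" by auto
    have "wr x > 0" using he[rule_format, of "x - r0"] x h wr0 by auto
    hence "h * wr x > 0" using h by simp
    hence "(u (r0+h) t0 - v (r0+h) t0) > (u r0 t0 - v r0 t0)" using eq by linarith
    moreover have "u (r0+h) t0 - v (r0+h) t0 \<le> u r0 t0 - v r0 t0"
      using wmax h r0p by auto
    ultimately show False by simp
  qed
  have dt: "((\<lambda>s. exp (-s) * (u r0 s - v r0 s)) has_real_derivative
      (exp (-t0) * (ut r0 t0 - vt r0 t0) + (- exp (-t0)) * (u r0 t0 - v r0 t0))) (at t0)"
  proof -
    have a: "((\<lambda>s. u r0 s - v r0 s) has_real_derivative (ut r0 t0 - vt r0 t0)) (at t0)"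
      using du dv D0 by (fastforce intro: DERIV_diff)
    have b: "((\<lambda>s. exp (-s)) has_real_derivative (- exp (-t0))) (at t0)"
      by (auto intro!: derivative_eq_intros)
    show ?thesis using DERIV_mult[OF b a] by (simp add: algebra_simps)
  qed
  have tge: "ut r0 t0 - vt r0 t0 - (u r0 t0 - v r0 t0) \<ge> 0"
  proof (rule ccontr)
    assume "\<not> ?thesis"
    hence "exp (-t0) * (ut r0 t0 - vt r0 t0 - (u r0 t0 - v r0 t0)) < 0"
      by (simp add: mult_pos_neg)
    hence neg: "exp (-t0) * (ut r0 t0 - vt r0 t0) + (- exp (-t0)) * (u r0 t0 - v r0 t0) < 0"
      by (simp add: algebra_simps)
    from DERIV_neg_dec_left[OF dt neg] obtain e where e: "e > 0"
      and he: "\<forall>h>0. h < e \<longrightarrow> exp (-t0) * (u r0 t0 - v r0 t0) < exp (-(t0-h)) * (u r0 (t0-h) - v r0 (t0-h))"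
      by blast
    define h where "h = min (e/2) (t0/2)"
    have h: "h > 0" "h < e" "t0 - h \<ge> 0" unfolding h_def using e t0p by auto
    have "(r0, t0 - h) \<in> K" using h r0R t0 unfolding K_def by auto
    hence "z (r0, t0-h) \<le> z (r0,t0)" using pmax p by auto
    hence le: "exp (-(t0-h)) * (u r0 (t0-h) - v r0 (t0-h)) \<le> exp (-t0) * (u r0 t0 - v r0 t0)"
      unfolding z_def by simp
    have "exp (-t0) * (u r0 t0 - v r0 t0) < exp (-(t0-h)) * (u r0 (t0-h) - v r0 (t0-h))"
      using he h(1,2) by blast
    thus False using le by linarith
  qed
  have eqs: "ut r0 t0 = urr r0 t0 + (real n - 1) / r0 * ur r0 t0 + u r0 t0 * (ur r0 t0) ^ 3"
    "vt r0 t0 = vrr r0 t0 + (real n - 1) / r0 * vr r0 t0 + v r0 t0 * (vr r0 t0) ^ 3"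
    "ur r0 t0 \<le> 0" using du dv D0 by auto
  have same: "vr r0 t0 = ur r0 t0" using wr0 unfolding wr_def by simp
  have "ut r0 t0 - vt r0 t0 = (urr r0 t0 - vrr r0 t0) + (u r0 t0 - v r0 t0) * (ur r0 t0) ^ 3"
    using eqs same by (simp add: algebra_simps)
  moreover have "(u r0 t0 - v r0 t0) * (ur r0 t0) ^ 3 \<le> 0"
  proof -
    have "(ur r0 t0) ^ 3 \<le> 0" using eqs(3) by (simp add: power3_eq_cube mult_nonneg_nonpos zero_le_mult_iff)
    thus ?thesis using w0 by (simp add: mult_nonneg_nonpos)
  qed
  ultimately show False using tge wrr w0 by linarith
qed

theorem mainTheorem12:
  fixes n :: nat and R :: real and u0 :: "real \<Rightarrow> real"
    and u v :: "real \<Rightarrow> real \<Rightarrow> real"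
  assumes "R > 0" and "n \<ge> 2"
    and "radial_solution n R u0 u"
    and "radial_solution n R u0 v"
  shows "\<forall>r\<in>{0..R}. \<forall>t\<ge>0. u r t = v r t"
  using one_side[OF assms(1) assms(3) assms(4)] one_side[OF assms(1) assms(4) assms(3)]
  by (meson order_antisym)

end
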